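(* Let $S_5\subseteq(\mathbb C^2)^{\otimes3}$ (three parties, one qubit each) be the 5-dimensional span of $|000\rangle$, $|001\rangle-|100\rangle$, $|110\rangle-|011\rangle$, $|001\rangle+|010\rangle+|100\rangle$, $|110\rangle+|101\rangle+|011\rangle$. Then $S_5$ is locally indistinguishable: no orthonormal basis of $S_5$ is perfectly distinguishable by LOCC.
   Context: "Perfectly distinguishable by LOCC": there is a finite-round protocol, in each round one party performing a local measurement and broadcasting the outcome, that identifies with probability 1 which state of the set was given. *)

theory Defs
  imports Complex_Main
begin

text \<open>Computational basis label
  (a,b,c) with False = 0 and True = 1; a global (unnormalised) state vector of
  (C^2)^{\<otimes>3} is a function from labels to complex amplitudes.\<close>

type_synonym label = "bool \<times> bool \<times> bool"
type_synonym state = "label \<Rightarrow> complex"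
type_synonym local_op = "bool \<Rightarrow> bool \<Rightarrow> complex"  \<comment> \<open>2x2 matrix, entry (row, column)\<close>

definition ket :: "label \<Rightarrow> state" where
  "ket a = (\<lambda>x. if x = a then 1 else 0)"

definition vadd :: "state \<Rightarrow> state \<Rightarrow> state" where
  "vadd v w = (\<lambda>x. v x + w x)"

definition vsub :: "state \<Rightarrow> state \<Rightarrow> state" where
  "vsub v w = (\<lambda>x. v x - w x)"

definition inner :: "state \<Rightarrow> state \<Rightarrow> complex" where
  "inner v w = (\<Sum>x\<in>UNIV. cnj (v x) * w x)"

definition lin_comb :: "(nat \<Rightarrow> complex) \<Rightarrow> (nat \<Rightarrow> state) \<Rightarrow> nat \<Rightarrow> state" where
  "lin_comb c g n = (\<lambda>x. \<Sum>k<n. c k * g k x)"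

definition span_of :: "(nat \<Rightarrow> state) \<Rightarrow> nat \<Rightarrow> state set" where
  "span_of g n = range (\<lambda>c. lin_comb c g n)"

definition orthonormal_basis_of :: "(nat \<Rightarrow> state) \<Rightarrow> nat \<Rightarrow> state set \<Rightarrow> bool" where
  "orthonormal_basis_of b n S \<longleftrightarrow>
     (\<forall>i<n. \<forall>j<n. inner (b i) (b j) = (if i = j then 1 else 0)) \<and> span_of b n = S"

definition gen5 :: "nat \<Rightarrow> state" where
  "gen5 k = (if k = 0 then ket (False, False, False)
     else if k = 1 then vsub (ket (False, False, True)) (ket (True, False, False))
     else if k = 2 then vsub (ket (True, True, False)) (ket (False, True, True))
     else if k = 3 then vadd (vadd (ket (False, False, True)) (ket (False, True, False)))
                             (ket (True, False, False))
     else vadd (vadd (ket (True, True, False)) (ket (True, False, True)))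
               (ket (False, True, True)))"

definition S5 :: "state set" where
  "S5 = span_of gen5 5"

definition apply_local :: "nat \<Rightarrow> local_op \<Rightarrow> state \<Rightarrow> state" where
  "apply_local p A v = (\<lambda>(a, b, c).
     if p = 0 then (\<Sum>y\<in>UNIV. A a y * v (y, b, c))
     else if p = 1 then (\<Sum>y\<in>UNIV. A b y * v (a, y, c))
     else (\<Sum>y\<in>UNIV. A c y * v (a, b, y)))"

text \<open>A local measurement given by Kraus operators A_k (one per outcome):
  sum_k A_k^\<dagger> A_k = I.\<close>
definition kraus_complete :: "local_op list \<Rightarrow> bool" where
  "kraus_complete As \<longleftrightarrow>
     (\<forall>x y. (\<Sum>A\<leftarrow>As. \<Sum>a\<in>UNIV. cnj (A a x) * A a y) = (if x = y then 1 else 0))"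

text \<open>Finite-round LOCC protocol tree: at a node, party p performs a local
  measurement with the listed Kraus operators, broadcasts the outcome, and the
  protocol continues with the subtree for that outcome; a leaf outputs a guess.\<close>
datatype protocol = Leaf nat | Node nat "(local_op \<times> protocol) list"

fun wf_protocol :: "protocol \<Rightarrow> bool" where
  "wf_protocol (Leaf j) = True"
| "wf_protocol (Node p bs) \<longleftrightarrow> p < 3 \<and> kraus_complete (map fst bs) \<and>
     (\<forall>bt \<in> set bs. wf_protocol (snd bt))"

text \<open>Run on the (unnormalised) branch state v when the true index is i: every
  leaf reached with non-zero probability (non-zero branch vector) outputs i.\<close>
fun identifies :: "protocol \<Rightarrow> state \<Rightarrow> nat \<Rightarrow> bool" where
  "identifies (Leaf j) v i \<longleftrightarrow> v = (\<lambda>_. 0) \<or> j = i"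
| "identifies (Node p bs) v i \<longleftrightarrow>
     (\<forall>bt \<in> set bs. identifies (snd bt) (apply_local p (fst bt) v) i)"

definition LOCC_perfectly_distinguishable :: "(nat \<Rightarrow> state) \<Rightarrow> nat \<Rightarrow> bool" where
  "LOCC_perfectly_distinguishable b n \<longleftrightarrow>
     (\<exists>t. wf_protocol t \<and> (\<forall>i<n. identifies t (b i) i))"

end

theory Submission
  imports Defs
begin

lemma sum_label: "(\<Sum>x\<in>(UNIV::label set). f x) =
  f (False,False,False) + f (False,False,True) + f (False,True,False) + f (False,True,True) +
  f (True,False,False) + f (True,False,True) + f (True,True,False) + f (True,True,True)"
proof -
  have U: "(UNIV::label set) = {(False,False,False), (False,False,True), (False,True,False),
      (False,True,True), (True,False,False), (True,False,True), (True,True,False), (True,True,True)}"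
    by (auto simp: UNIV_bool)
  show ?thesis by (subst U) (simp add: add.assoc)
qed



definition adj :: "local_op \<Rightarrow> local_op" where
  "adj A = (\<lambda>a y. cnj (A y a))"

lemma sum_bool: "(\<Sum>x\<in>(UNIV::bool set). f x) = f False + f True"
  by (simp add: UNIV_bool)

lemma adj_inner: "p < 3 \<Longrightarrow> inner (apply_local p (adj A) m) v = inner m (apply_local p A v)"
  unfolding inner_def apply_local_def adj_def
  by (auto simp: sum_label sum_bool algebra_simps)

definition is_prod :: "state \<Rightarrow> bool" where
  "is_prod m \<longleftrightarrow> (\<exists>X Y Z. \<forall>a b c. m (a,b,c) = X a * Y b * Z c)"

lemma prod_apply: assumes "is_prod m" shows "is_prod (apply_local p A m)"
proof -
  obtain X Y Z where m: "\<And>a b c. m (a,b,c) = X a * Y b * Z c" using assms unfolding is_prod_def by blast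
  show ?thesis
  proof (cases "p = 0")
    case True
    then show ?thesis unfolding is_prod_def apply_local_def
      by (rule_tac x="\<lambda>a. \<Sum>y\<in>UNIV. A a y * X y" in exI, rule_tac x=Y in exI, rule_tac x=Z in exI)
         (simp add: m sum_bool algebra_simps)
  next
    case F: False
    show ?thesis
    proof (cases "p = 1")
      case True
      then show ?thesis unfolding is_prod_def apply_local_def
        by (rule_tac x=X in exI, rule_tac x="\<lambda>a. \<Sum>y\<in>UNIV. A a y * Y y" in exI, rule_tac x=Z in exI)
           (simp add: m sum_bool algebra_simps)
    next
      case False
      then show ?thesis using F unfolding is_prod_def apply_local_def
        by (rule_tac x=X in exI, rule_tac x=Y in exI, rule_tac x="\<lambda>a. \<Sum>y\<in>UNIV. A a y * Z y" in exI)
           (simp add: m sum_bool algebra_simps)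
    qed
  qed
qed

definition G :: "local_op \<Rightarrow> bool \<Rightarrow> bool \<Rightarrow> complex" where
  "G A y y' = (\<Sum>a\<in>UNIV. cnj (A a y) * A a y')"

definition K :: "nat \<Rightarrow> state \<Rightarrow> state \<Rightarrow> bool \<Rightarrow> bool \<Rightarrow> complex" where
  "K p v w y y' = (\<Sum>b\<in>UNIV. \<Sum>c\<in>UNIV. (if p = 0 then cnj (v (y,b,c)) * w (y',b,c)
      else if p = 1 then cnj (v (b,y,c)) * w (b,y',c) else cnj (v (b,c,y)) * w (b,c,y')))"

lemma inner_apply_K: "inner (apply_local p A v) (apply_local p A w) =
   K p v w False False * G A False False + K p v w False True * G A False True +
   K p v w True False * G A True False + K p v w True True * G A True True"
  unfolding inner_def apply_local_def K_def G_def
  by (auto simp: sum_label sum_bool algebra_simps)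

lemma K_diag: "K p v w False False + K p v w True True = inner v w"
  unfolding inner_def K_def by (auto simp: sum_label sum_bool algebra_simps)

lemma kraus_sum:
  assumes "kraus_complete As"
  shows "(\<Sum>A\<leftarrow>As. inner (apply_local p A v) (apply_local p A w)) = inner v w"
proof -
  have g: "(\<Sum>A\<leftarrow>As. G A y y') = (if y = y' then 1 else 0)" for y y'
    using assms unfolding kraus_complete_def G_def by simp
  have "(\<Sum>A\<leftarrow>As. inner (apply_local p A v) (apply_local p A w)) =
     K p v w False False * (\<Sum>A\<leftarrow>As. G A False False) + K p v w False True * (\<Sum>A\<leftarrow>As. G A False True) +
     K p v w True False * (\<Sum>A\<leftarrow>As. G A True False) + K p v w True True * (\<Sum>A\<leftarrow>As. G A True True)"
    by (simp add: inner_apply_K sum_list_addf sum_list_const_mult)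
  also have "\<dots> = inner v w" by (simp add: g K_diag)
  finally show ?thesis .
qed




lemma F0: "inner (gen5 0) v = v (False,False,False)"
  unfolding inner_def gen5_def ket_def by (simp add: sum_label)
lemma F1: "inner (gen5 1) v = v (False,False,True) - v (True,False,False)"
  unfolding inner_def gen5_def ket_def vsub_def by (simp add: sum_label)
lemma F2: "inner (gen5 2) v = v (True,True,False) - v (False,True,True)"
  unfolding inner_def gen5_def ket_def vsub_def by (simp add: sum_label)
lemma F3: "inner (gen5 3) v = v (False,False,True) + v (False,True,False) + v (True,False,False)"
  unfolding inner_def gen5_def ket_def vadd_def by (simp add: sum_label)
lemma F4: "inner (gen5 4) v = v (True,True,False) + v (True,False,True) + v (False,True,True)"
  unfolding inner_def gen5_def ket_def vadd_def by (simp add: sum_label)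

lemma S5_cond: assumes "v \<in> S5"
  shows "v (True,True,True) = 0 \<and> v (False,False,True) - 2 * v (False,True,False) + v (True,False,False) = 0
     \<and> v (True,True,False) - 2 * v (True,False,True) + v (False,True,True) = 0"
proof -
  obtain c where v: "v = lin_comb c gen5 5" using assms unfolding S5_def span_of_def by auto
  show ?thesis unfolding v lin_comb_def
    by (simp add: eval_nat_numeral gen5_def ket_def vadd_def vsub_def algebra_simps)
qed

lemma inner_lin_comb: "inner m (lin_comb c g n) = (\<Sum>j<n. c j * inner m (g j))"
  unfolding inner_def lin_comb_def
  by (simp add: sum_distrib_left sum.swap[of _ UNIV] algebra_simps)

lemma inner_cnj: "inner u v = cnj (inner v u)"
  unfolding inner_def by (simp add: mult.commute)

lemma inner_ket_l: "inner (ket x) v = v x"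
proof -
  have "inner (ket x) v = (\<Sum>y\<in>UNIV. if y = x then v y else 0)"
    unfolding inner_def ket_def by (rule sum.cong) auto
  then show ?thesis by simp
qed

lemma inner_ket_r: "inner m (ket x) = cnj (m x)"
proof -
  have "inner m (ket x) = (\<Sum>y\<in>UNIV. if y = x then cnj (m y) else 0)"
    unfolding inner_def ket_def by (rule sum.cong) auto
  then show ?thesis by simp
qed

lemma inner_div_r: "inner u (\<lambda>x. v x / c) = inner u v / c"
  unfolding inner_def by (simp add: sum_divide_distrib)

lemma inner_zero_r: "inner u (\<lambda>_. 0) = 0"
  unfolding inner_def by simp

lemma sum_list_map_nth: "(\<Sum>x\<leftarrow>xs. f x) = (\<Sum>r<length xs. f (xs ! r))"
  by (simp add: sum_list_sum_nth atLeast0LessThan)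




definition labels :: "label list" where
  "labels = [(False,False,False), (False,False,True), (False,True,False), (False,True,True),
     (True,False,False), (True,False,True), (True,True,False), (True,True,True)]"

lemma ket_prod: "is_prod (ket x)"
proof -
  obtain x1 x2 x3 where x: "x = (x1,x2,x3)" by (cases x) auto
  show ?thesis unfolding is_prod_def ket_def x
    by (rule exI[of _ "\<lambda>a. if a = x1 then 1 else 0"], rule exI[of _ "\<lambda>a. if a = x2 then 1 else 0"],
        rule exI[of _ "\<lambda>a. if a = x3 then 1 else 0"]) auto
qed

lemma sum_list_concat_map: "(\<Sum>x\<leftarrow>concat xss. f x) = (\<Sum>xs\<leftarrow>xss. \<Sum>x\<leftarrow>xs. f x)"
  by (induction xss) auto

definition R1 :: "(state \<times> nat) list \<Rightarrow> bool" where
  "R1 ms \<longleftrightarrow> (\<forall>v w. inner v w = (\<Sum>(m,j)\<leftarrow>ms. cnj (inner m v) * inner m w))"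

definition R3 :: "protocol \<Rightarrow> (state \<times> nat) list \<Rightarrow> bool" where
  "R3 t ms \<longleftrightarrow> (\<forall>v i. identifies t v i \<longrightarrow> (\<forall>(m,j)\<in>set ms. inner m v \<noteq> 0 \<longrightarrow> j = i))"

lemma rows_exist: "wf_protocol t \<Longrightarrow> \<exists>ms. R1 ms \<and> (\<forall>(m,j)\<in>set ms. is_prod m) \<and> R3 t ms"
proof (induction t)
  case (Leaf j)
  let ?ms = "map (\<lambda>x. (ket x, j)) labels"
  have "R1 ?ms" unfolding R1_def
    by (simp add: labels_def inner_ket_l, simp add: inner_def sum_label)
  moreover have "\<forall>(m,j)\<in>set ?ms. is_prod m" by (auto simp: ket_prod)
  moreover have "R3 (Leaf j) ?ms" unfolding R3_def by (auto simp: inner_zero_r)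
  ultimately show ?case by blast
next
  case (Node p bs)
  have "\<forall>bt\<in>set bs. \<exists>ms. R1 ms \<and> (\<forall>(m,j)\<in>set ms. is_prod m) \<and> R3 (snd bt) ms"
  proof
    fix bt assume bt: "bt \<in> set bs"
    show "\<exists>ms. R1 ms \<and> (\<forall>(m,j)\<in>set ms. is_prod m) \<and> R3 (snd bt) ms"
      using Node.IH[OF bt] Node.prems bt by (cases bt) auto
  qed
  then obtain f where f: "\<And>bt. bt \<in> set bs \<Longrightarrow> R1 (f bt) \<and> (\<forall>(m,j)\<in>set (f bt). is_prod m) \<and> R3 (snd bt) (f bt)"
    by metis
  have p3: "p < 3" and kc: "kraus_complete (map fst bs)" and wfs: "\<forall>bt\<in>set bs. wf_protocol (snd bt)"
    using Node.prems by auto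
  define g where "g bt = map (\<lambda>(m,j). (apply_local p (adj (fst bt)) m, j)) (f bt)" for bt
  let ?ms = "concat (map g bs)"
  have "R1 ?ms" unfolding R1_def
  proof (intro allI)
    fix v w
    have "inner v w = (\<Sum>A\<leftarrow>map fst bs. inner (apply_local p A v) (apply_local p A w))"
      using kraus_sum[OF kc] by simp
    also have "\<dots> = (\<Sum>bt\<leftarrow>bs. inner (apply_local p (fst bt) v) (apply_local p (fst bt) w))"
      by (simp add: comp_def)
    also have "\<dots> = (\<Sum>bt\<leftarrow>bs. (\<Sum>(m,j)\<leftarrow>g bt. cnj (inner m v) * inner m w))"
    proof (rule arg_cong[where f=sum_list], rule map_cong[OF refl])
      fix bt assume bt: "bt \<in> set bs"
      have "inner (apply_local p (fst bt) v) (apply_local p (fst bt) w) =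
          (\<Sum>(m,j)\<leftarrow>f bt. cnj (inner m (apply_local p (fst bt) v)) * inner m (apply_local p (fst bt) w))"
        using f[OF bt] unfolding R1_def by blast
      also have "\<dots> = (\<Sum>(m,j)\<leftarrow>g bt. cnj (inner m v) * inner m w)"
        unfolding g_def by (simp add: comp_def split_def adj_inner[OF p3])
      finally show "inner (apply_local p (fst bt) v) (apply_local p (fst bt) w) =
          (\<Sum>(m,j)\<leftarrow>g bt. cnj (inner m v) * inner m w)" .
    qed
    also have "\<dots> = (\<Sum>(m,j)\<leftarrow>?ms. cnj (inner m v) * inner m w)"
      by (simp add: sum_list_concat_map comp_def)
    finally show "inner v w = (\<Sum>(m,j)\<leftarrow>?ms. cnj (inner m v) * inner m w)" .
  qed
  moreover have "\<forall>(m,j)\<in>set ?ms. is_prod m"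
    using f unfolding g_def by (fastforce intro: prod_apply)
  moreover have "R3 (Node p bs) ?ms" unfolding R3_def
  proof (intro allI impI ballI)
    fix v i mj assume id: "identifies (Node p bs) v i" and mj: "mj \<in> set ?ms"
    then obtain bt where bt: "bt \<in> set bs" and mjg: "mj \<in> set (g bt)" by auto
    then obtain m j where mjf: "(m,j) \<in> set (f bt)" and mjeq: "mj = (apply_local p (adj (fst bt)) m, j)"
      unfolding g_def by auto
    have "identifies (snd bt) (apply_local p (fst bt) v) i" using id bt by auto
    then have "inner m (apply_local p (fst bt) v) \<noteq> 0 \<longrightarrow> j = i"
      using f[OF bt] mjf unfolding R3_def by fastforce
    then show "case mj of (m, j) \<Rightarrow> inner m v \<noteq> 0 \<longrightarrow> j = i"
      using mjeq adj_inner[OF p3] by simp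
  qed
  ultimately show ?case by blast
qed




lemma wsum_cong: "(\<And>r. r\<in>I \<Longrightarrow> w r \<noteq> 0 \<Longrightarrow> f r = g r) \<Longrightarrow> (\<Sum>r\<in>I. (w r::complex) * f r) = (\<Sum>r\<in>I. w r * g r)"
  by (rule sum.cong) (simp, metis mult_zero_left)

lemma wsum_const: "(\<And>r. r\<in>I \<Longrightarrow> w r \<noteq> 0 \<Longrightarrow> f r = c) \<Longrightarrow> (\<Sum>r\<in>I. (w r::complex) * f r) = c * (\<Sum>r\<in>I. w r)"
proof -
  assume h: "\<And>r. r\<in>I \<Longrightarrow> w r \<noteq> 0 \<Longrightarrow> f r = c"
  have "(\<Sum>r\<in>I. w r * f r) = (\<Sum>r\<in>I. w r * c)" by (rule wsum_cong) (use h in auto)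
  then show ?thesis by (metis sum_distrib_right mult.commute)
qed

lemma lin3: "(\<Sum>r\<in>I. (w r::complex) * (x r - 2 * y r + z r)) =
   (\<Sum>r\<in>I. w r * x r) - 2 * (\<Sum>r\<in>I. w r * y r) + (\<Sum>r\<in>I. w r * z r)"
  by (simp add: sum.distrib sum_subtractf sum_distrib_left algebra_simps)

lemma lsum1: "(\<Sum>r\<in>I. (w r::complex) * (k1 * f r - k2)) = k1 * (\<Sum>r\<in>I. w r * f r) - k2 * (\<Sum>r\<in>I. w r)"
proof -
  have "(\<Sum>r\<in>I. w r * (k1 * f r - k2)) = (\<Sum>r\<in>I. k1 * (w r * f r) - k2 * w r)"
    by (rule sum.cong) (auto simp: algebra_simps)
  then show ?thesis by (simp add: sum_subtractf sum_distrib_left)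
qed

lemma lsum2: "(\<Sum>r\<in>I. (w r::complex) * (k1 * f r - k2 * g r)) = k1 * (\<Sum>r\<in>I. w r * f r) - k2 * (\<Sum>r\<in>I. w r * g r)"
proof -
  have "(\<Sum>r\<in>I. w r * (k1 * f r - k2 * g r)) = (\<Sum>r\<in>I. k1 * (w r * f r) - k2 * (w r * g r))"
    by (rule sum.cong) (auto simp: algebra_simps)
  then show ?thesis by (simp add: sum_subtractf sum_distrib_left)
qed

lemma lsum3: "(\<Sum>r\<in>I. (w r::complex) * (k1 * g r - k2 * f r + k3)) = k1 * (\<Sum>r\<in>I. w r * g r) - k2 * (\<Sum>r\<in>I. w r * f r) + k3 * (\<Sum>r\<in>I. w r)"
proof -
  have "(\<Sum>r\<in>I. w r * (k1 * g r - k2 * f r + k3)) = (\<Sum>r\<in>I. k1 * (w r * g r) - k2 * (w r * f r) + k3 * w r)"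
    by (rule sum.cong) (auto simp: algebra_simps)
  then show ?thesis by (simp add: sum_subtractf sum.distrib sum_distrib_left)
qed

lemma triple:
  fixes w p q s :: "'i \<Rightarrow> complex"
  assumes h: "\<And>r. r\<in>I \<Longrightarrow> w r \<noteq> 0 \<Longrightarrow> p r * q r = 0 \<and> p r * s r = 0 \<and> q r * s r = 0 \<and>
            p r - s r = g1 \<and> p r + q r + s r = g2"
    and sm: "(\<Sum>r\<in>I. w r * (p r - 2 * q r + s r)) = 0"
    and N: "(\<Sum>r\<in>I. w r) \<noteq> 0"
  shows "\<And>r. r\<in>I \<Longrightarrow> w r \<noteq> 0 \<Longrightarrow> p r = 0 \<and> q r = 0 \<and> s r = 0"
proof -
  obtain r0 where r0: "r0 \<in> I" "w r0 \<noteq> 0"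
    using N by (metis (mono_tags, lifting) sum.neutral)
  show "\<And>r. r\<in>I \<Longrightarrow> w r \<noteq> 0 \<Longrightarrow> p r = 0 \<and> q r = 0 \<and> s r = 0"
  proof (cases "g1 = 0")
    case False
    have row: "p r - 2 * q r + s r = g2 \<and> g2 \<noteq> 0" if "r\<in>I" "w r \<noteq> 0" for r
    proof -
      from h[OF that] have a: "p r * q r = 0" "p r * s r = 0" "q r * s r = 0" "p r - s r = g1" "p r + q r + s r = g2"
        by auto
      show ?thesis
      proof (cases "p r = 0")
        case True
        then have "s r \<noteq> 0" using a(4) False by auto
        then have "q r = 0" using a(3) by auto
        then show ?thesis using a True \<open>s r \<noteq> 0\<close> by auto
      next
        case pn: False
        then have "q r = 0" "s r = 0" using a(1,2) by auto
        then show ?thesis using a pn by auto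
      qed
    qed
    have "(\<Sum>r\<in>I. w r * (p r - 2 * q r + s r)) = g2 * (\<Sum>r\<in>I. w r)"
      by (rule wsum_const) (use row in auto)
    moreover have "g2 \<noteq> 0" using row r0 by blast
    ultimately show "\<And>r. r\<in>I \<Longrightarrow> w r \<noteq> 0 \<Longrightarrow> p r = 0 \<and> q r = 0 \<and> s r = 0" using sm N by simp
  next
    case True
    have row: "p r = 0 \<and> s r = 0 \<and> q r = g2" if "r\<in>I" "w r \<noteq> 0" for r
    proof -
      from h[OF that] have a: "p r * s r = 0" "p r - s r = g1" "p r + q r + s r = g2"
        by auto
      then have "p r = s r" using True by simp
      then have "p r = 0" using a(1) by simp
      then show ?thesis using a \<open>p r = s r\<close> by simp
    qed
    have "(\<Sum>r\<in>I. w r * (p r - 2 * q r + s r)) = (-2 * g2) * (\<Sum>r\<in>I. w r)"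
      by (rule wsum_const) (use row in auto)
    then have "g2 = 0" using sm N by simp
    then show "\<And>r. r\<in>I \<Longrightarrow> w r \<noteq> 0 \<Longrightarrow> p r = 0 \<and> q r = 0 \<and> s r = 0" using row by simp
  qed
qed

lemma poly3: fixes A B C :: complex
  assumes "C * B * A = 0" "C - 2 * B + A = 0" "B * A - 2 * C * A + C * B = 0"
  shows "C = A"
proof -
  have s: "A + C = 2 * B" using assms(2) by (simp add: algebra_simps)
  have "B * (A + C) = 2 * C * A" using assms(3) by (simp add: algebra_simps)
  then have bb: "B * B = C * A" using s by (simp add: algebra_simps)
  then have "B * B * B = 0" using assms(1) by (metis mult.commute mult.left_commute)
  then have "B = 0" by simp
  then have "C * A = 0" "A = - C" using bb s by (auto simp: algebra_simps)
  then show ?thesis by auto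
qed




lemma core:
  fixes w :: "'i \<Rightarrow> complex" and nn :: "'i \<Rightarrow> state" and b :: state
  assumes rows: "\<And>r. r\<in>I \<Longrightarrow> w r \<noteq> 0 \<Longrightarrow> is_prod (nn r) \<and> (\<forall>k<5. inner (gen5 k) (nn r) = inner (gen5 k) b)"
    and B: "\<And>x. b x = (\<Sum>r\<in>I. w r * nn r x)"
    and N: "(\<Sum>r\<in>I. w r) \<noteq> 0"
    and S: "b \<in> S5"
  shows "x \<noteq> (False,False,False) \<Longrightarrow> b x = 0"
proof -
  define e where "e r = nn r (False,False,False)" for r
  define c where "c r = nn r (False,False,True)" for r
  define bb where "bb r = nn r (False,True,False)" for r
  define a where "a r = nn r (True,False,False)" for r
  define rr where "rr r = nn r (False,True,True)" for r
  define q where "q r = nn r (True,False,True)" for r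
  define pp where "pp r = nn r (True,True,False)" for r
  define t where "t r = nn r (True,True,True)" for r
  define \<beta> where "\<beta> = b (False,False,False)"
  define G1 where "G1 = b (False,False,True) - b (True,False,False)"
  define G2 where "G2 = b (False,False,True) + b (False,True,False) + b (True,False,False)"
  define H1 where "H1 = b (True,True,False) - b (False,True,True)"
  define H2 where "H2 = b (True,True,False) + b (True,False,True) + b (False,True,True)"
  define NN where "NN = (\<Sum>r\<in>I. w r)"
  have NN0: "NN \<noteq> 0" using N NN_def by simp
  have S1: "b (True,True,True) = 0" and S2: "b (False,False,True) - 2 * b (False,True,False) + b (True,False,False) = 0"
    and S3: "b (True,True,False) - 2 * b (True,False,True) + b (False,True,True) = 0"
    using S5_cond[OF S] by auto
  have row: "e r = \<beta> \<and> c r - a r = G1 \<and> pp r - rr r = H1 \<and> c r + bb r + a r = G2 \<and> pp r + q r + rr r = H2 \<and>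
     e r * rr r = c r * bb r \<and> e r * q r = c r * a r \<and> e r * pp r = bb r * a r \<and>
     e r * e r * t r = c r * bb r * a r \<and> pp r * q r = a r * t r \<and> pp r * rr r = bb r * t r \<and>
     q r * rr r = c r * t r" if r: "r \<in> I" "w r \<noteq> 0" for r
  proof -
    from rows[OF r] obtain X Y Z where xyz: "\<And>a b c. nn r (a,b,c) = X a * Y b * Z c"
      and f: "\<forall>k<5. inner (gen5 k) (nn r) = inner (gen5 k) b" unfolding is_prod_def by blast
    have f0: "inner (gen5 0) (nn r) = inner (gen5 0) b" and f1: "inner (gen5 1) (nn r) = inner (gen5 1) b"
      and f2: "inner (gen5 2) (nn r) = inner (gen5 2) b" and f3: "inner (gen5 3) (nn r) = inner (gen5 3) b"
      and f4: "inner (gen5 4) (nn r) = inner (gen5 4) b" using f by auto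
    have A: "e r = \<beta> \<and> c r - a r = G1 \<and> pp r - rr r = H1 \<and> c r + bb r + a r = G2 \<and> pp r + q r + rr r = H2"
      using f0 f1 f2 f3 f4 unfolding F0 F1 F2 F3 F4 e_def c_def bb_def a_def rr_def q_def pp_def t_def
        \<beta>_def G1_def G2_def H1_def H2_def
      by simp
    have P: "e r * rr r = c r * bb r \<and> e r * q r = c r * a r \<and> e r * pp r = bb r * a r \<and>
     e r * e r * t r = c r * bb r * a r \<and> pp r * q r = a r * t r \<and> pp r * rr r = bb r * t r \<and>
     q r * rr r = c r * t r"
      unfolding e_def c_def bb_def a_def rr_def q_def pp_def t_def
      by (simp add: xyz algebra_simps)
    show ?thesis using A P by blast
  qed
  have Bs: "b x = (\<Sum>r\<in>I. w r * nn r x)" for x using B by simp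
  have sumc2: "(\<Sum>r\<in>I. w r * (c r - 2 * bb r + a r)) = 0"
    using S2 unfolding lin3 c_def bb_def a_def by (simp add: Bs)
  have sumc3: "(\<Sum>r\<in>I. w r * (pp r - 2 * q r + rr r)) = 0"
    using S3 unfolding lin3 pp_def q_def rr_def by (simp add: Bs)
  have Z: "c r = 0 \<and> bb r = 0 \<and> a r = 0 \<and> rr r = 0 \<and> q r = 0 \<and> pp r = 0"
    if r: "r \<in> I" "w r \<noteq> 0" for r
  proof (cases "\<beta> = 0")
    case True
    have w1: "c r = 0 \<and> bb r = 0 \<and> a r = 0" if "r \<in> I" "w r \<noteq> 0" for r
    proof (rule triple[of I w c bb a G1 G2 r])
      show "\<And>r. r \<in> I \<Longrightarrow> w r \<noteq> 0 \<Longrightarrow> c r * bb r = 0 \<and> c r * a r = 0 \<and> bb r * a r = 0 \<and>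
        c r - a r = G1 \<and> c r + bb r + a r = G2"
        using row True by (metis mult_zero_left)
    qed (use sumc2 N that in auto)
    have w2: "pp r = 0 \<and> q r = 0 \<and> rr r = 0" if "r \<in> I" "w r \<noteq> 0" for r
    proof (rule triple[of I w pp q rr H1 H2 r])
      show "\<And>r. r \<in> I \<Longrightarrow> w r \<noteq> 0 \<Longrightarrow> pp r * q r = 0 \<and> pp r * rr r = 0 \<and> q r * rr r = 0 \<and>
        pp r - rr r = H1 \<and> pp r + q r + rr r = H2"
        using row w1 by (metis mult_zero_left)
    qed (use sumc3 N that in auto)
    show ?thesis using w1[OF r] w2[OF r] by simp
  next
    case bn: False
    show ?thesis
    proof (cases "G1 = 0")
      case False
      define B0 where "B0 = - \<beta> * H1 / G1"
      define C0 where "C0 = (G2 - B0 + G1) / 2"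
      define A0 where "A0 = (G2 - B0 - G1) / 2"
      have rowB: "bb r = B0 \<and> c r = C0 \<and> a r = A0 \<and> t r = C0 * B0 * A0 / (\<beta> * \<beta>) \<and>
          pp r = B0 * A0 / \<beta> \<and> q r = C0 * A0 / \<beta> \<and> rr r = C0 * B0 / \<beta>"
        if "r \<in> I" "w r \<noteq> 0" for r
      proof -
        note h = row[OF that]
        have "bb r * G1 = bb r * (c r - a r)" using h by simp
        also have "\<dots> = e r * rr r - e r * pp r"
        proof -
          have k1: "e r * rr r = c r * bb r" "e r * pp r = bb r * a r" using h by auto
          show ?thesis unfolding k1 by (simp add: algebra_simps)
        qed
        also have "\<dots> = - (e r * (pp r - rr r))" by (simp add: algebra_simps)
        also have "\<dots> = - \<beta> * H1" using h by simp
        finally have hb: "bb r = B0" unfolding B0_def using False by (simp add: field_simps)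
        have l1: "c r - a r = G1" and l2: "c r + bb r + a r = G2" using h by auto
        have "2 * c r = (c r + bb r + a r) - bb r + (c r - a r)" by (simp add: algebra_simps)
        also have "\<dots> = G2 - B0 + G1" by (simp only: l1 l2) (simp add: hb)
        finally have hc1: "c r = C0" unfolding C0_def by (simp add: field_simps)
        have "2 * a r = (c r + bb r + a r) - bb r - (c r - a r)" by (simp add: algebra_simps)
        also have "\<dots> = G2 - B0 - G1" by (simp only: l1 l2) (simp add: hb)
        finally have hc2: "a r = A0" unfolding A0_def by (simp add: field_simps)
        have m: "e r * e r * t r = c r * bb r * a r" "e r * pp r = bb r * a r" "e r * q r = c r * a r"
          "e r * rr r = c r * bb r" "e r = \<beta>" using h by auto
        have "t r = C0 * B0 * A0 / (\<beta> * \<beta>)" using m(1) bn unfolding m(5) hb hc1 hc2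
          by (simp add: field_simps)
        moreover have "pp r = B0 * A0 / \<beta>" using m(2) bn unfolding m(5) hb hc1 hc2
          by (simp add: field_simps)
        moreover have "q r = C0 * A0 / \<beta>" using m(3) bn unfolding m(5) hb hc1 hc2
          by (simp add: field_simps)
        moreover have "rr r = C0 * B0 / \<beta>" using m(4) bn unfolding m(5) hb hc1 hc2
          by (simp add: field_simps)
        ultimately show ?thesis using hb hc1 hc2 by simp
      qed
      have b1: "b (False,False,True) = C0 * NN" unfolding Bs NN_def
        by (rule wsum_const) (use rowB c_def in auto)
      have b2: "b (False,True,False) = B0 * NN" unfolding Bs NN_def
        by (rule wsum_const) (use rowB bb_def in auto)
      have b3: "b (True,False,False) = A0 * NN" unfolding Bs NN_def
        by (rule wsum_const) (use rowB a_def in auto)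
      have b4: "b (True,True,True) = C0 * B0 * A0 / (\<beta> * \<beta>) * NN" unfolding Bs NN_def
        by (rule wsum_const) (use rowB t_def in auto)
      have b5: "b (True,True,False) = B0 * A0 / \<beta> * NN" unfolding Bs NN_def
        by (rule wsum_const) (use rowB pp_def in auto)
      have b6: "b (True,False,True) = C0 * A0 / \<beta> * NN" unfolding Bs NN_def
        by (rule wsum_const) (use rowB q_def in auto)
      have b7: "b (False,True,True) = C0 * B0 / \<beta> * NN" unfolding Bs NN_def
        by (rule wsum_const) (use rowB rr_def in auto)
      have e1: "C0 * B0 * A0 = 0" using S1 b4 NN0 bn by simp
      have e2: "C0 - 2 * B0 + A0 = 0"
      proof -
        have "(C0 - 2 * B0 + A0) * NN = 0" using S2 b1 b2 b3 by (simp add: algebra_simps)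
        then show ?thesis using NN0 by simp
      qed
      have e3: "B0 * A0 - 2 * C0 * A0 + C0 * B0 = 0"
      proof -
        have "(B0 * A0 - 2 * C0 * A0 + C0 * B0) / \<beta> * NN = 0" using S3 b5 b6 b7
          by (simp add: algebra_simps add_divide_distrib diff_divide_distrib)
        then show ?thesis using NN0 bn by simp
      qed
      have "C0 = A0" using poly3[OF e1 e2 e3] .
      then have "G1 = 0" unfolding C0_def A0_def by (simp add: field_simps)
      then show ?thesis using False by simp
    next
      case True
      have rowa: "a r = c r \<and> bb r = G2 - 2 * c r \<and> c r - 2 * bb r + a r = 6 * c r - 2 * G2 \<and>
         \<beta> * (pp r - 2 * q r + rr r) = 2 * G2 * c r - 6 * (c r * c r) \<and>
         3 * (c r * c r) - 2 * G2 * c r + \<beta> * H2 = 0"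
        if "r \<in> I" "w r \<noteq> 0" for r
      proof -
        note h = row[OF that]
        have ac: "a r = c r" using h True by simp
        have bc: "bb r = G2 - 2 * c r" using h ac by (simp add: algebra_simps)
        have m: "e r * rr r = c r * bb r" "e r * q r = c r * a r" "e r * pp r = bb r * a r" "e r = \<beta>"
          "pp r + q r + rr r = H2" using h by auto
        have "\<beta> * (pp r - 2 * q r + rr r) = e r * pp r - 2 * (e r * q r) + e r * rr r"
          unfolding m(4) by (simp add: algebra_simps)
        also have "\<dots> = 2 * G2 * c r - 6 * (c r * c r)" unfolding m(1-3) ac bc by (simp add: algebra_simps)
        finally have x1: "\<beta> * (pp r - 2 * q r + rr r) = 2 * G2 * c r - 6 * (c r * c r)" .
        have "\<beta> * H2 = e r * pp r + e r * q r + e r * rr r" unfolding m(4) m(5)[symmetric] by (simp add: algebra_simps)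
        also have "\<dots> = 2 * G2 * c r - 3 * (c r * c r)" unfolding m(1-3) ac bc by (simp add: algebra_simps)
        finally have x2: "\<beta> * H2 = 2 * G2 * c r - 3 * (c r * c r)" .
        show ?thesis using x1 x2 unfolding ac bc by (simp add: algebra_simps)
      qed
      define S1' where "S1' = (\<Sum>r\<in>I. w r * c r)"
      define S2' where "S2' = (\<Sum>r\<in>I. w r * (c r * c r))"
      have E1: "6 * S1' - 2 * G2 * NN = 0"
      proof -
        have "(\<Sum>r\<in>I. w r * (c r - 2 * bb r + a r)) = (\<Sum>r\<in>I. w r * (6 * c r - 2 * G2))"
          by (rule wsum_cong) (use rowa in auto)
        also have "\<dots> = 6 * S1' - 2 * G2 * NN" unfolding S1'_def NN_def
          by (rule lsum1)
        finally show ?thesis using sumc2 by simp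
      qed
      have E2: "2 * G2 * S1' - 6 * S2' = 0"
      proof -
        have "\<beta> * (\<Sum>r\<in>I. w r * (pp r - 2 * q r + rr r)) = (\<Sum>r\<in>I. w r * (\<beta> * (pp r - 2 * q r + rr r)))"
          by (simp add: sum_distrib_left algebra_simps)
        also have "\<dots> = (\<Sum>r\<in>I. w r * (2 * G2 * c r - 6 * (c r * c r)))"
          by (rule wsum_cong) (use rowa in auto)
        also have "\<dots> = 2 * G2 * S1' - 6 * S2'" unfolding S1'_def S2'_def
          by (rule lsum2)
        finally show ?thesis using sumc3 by simp
      qed
      have E3: "3 * S2' - 2 * G2 * S1' + \<beta> * H2 * NN = 0"
      proof -
        have "(\<Sum>r\<in>I. w r * (3 * (c r * c r) - 2 * G2 * c r + \<beta> * H2)) = 0"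
          by (subst wsum_cong[where g="\<lambda>_. 0"]) (use rowa in auto)
        moreover have "(\<Sum>r\<in>I. w r * (3 * (c r * c r) - 2 * G2 * c r + \<beta> * H2)) = 3 * S2' - 2 * G2 * S1' + \<beta> * H2 * NN"
          unfolding S1'_def S2'_def NN_def
          by (rule lsum3)
        ultimately show ?thesis by simp
      qed
      have "(\<beta> * H2 * 3 - G2 * G2) * NN = 3 * (3 * S2' - 2 * G2 * S1' + \<beta> * H2 * NN) +
           3 * (2 * G2 * S1' - 6 * S2') / 2 + G2 * (6 * S1' - 2 * G2 * NN) / 2"
        by (simp add: field_simps)
      also have "\<dots> = 0" unfolding E1 E2 E3 by simp
      finally have "(\<beta> * H2 * 3 - G2 * G2) * NN = 0" .
      then have bh: "\<beta> * H2 * 3 = G2 * G2" using NN0 by simp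
      have ca: "c r = G2 / 3" if "r \<in> I" "w r \<noteq> 0" for r
      proof -
        have qq: "3 * (c r * c r) - 2 * G2 * c r + \<beta> * H2 = 0" using rowa[OF that] by blast
        have "(3 * c r - G2) * (3 * c r - G2) = 3 * (3 * (c r * c r) - 2 * G2 * c r + \<beta> * H2) + (G2 * G2 - \<beta> * H2 * 3)"
          by (simp add: algebra_simps)
        also have "\<dots> = 0" unfolding qq bh by simp
        finally have "(3 * c r - G2) * (3 * c r - G2) = 0" .
        then have "3 * c r - G2 = 0" by simp
        then have "3 * c r = G2" by simp
        then show ?thesis by (simp add: field_simps)
      qed
      have rowt: "t r = (G2 / 3) * (G2 / 3) * (G2 / 3) / (\<beta> * \<beta>)" if "r \<in> I" "w r \<noteq> 0" for r
      proof -
        have m: "e r * e r * t r = c r * bb r * a r" "e r = \<beta>" using row[OF that] by blast+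
        have ab: "a r = G2 / 3" "bb r = G2 / 3" "c r = G2 / 3" using rowa[OF that] ca[OF that] by auto
        have "\<beta> * \<beta> * t r = (G2 / 3) * (G2 / 3) * (G2 / 3)" using m(1) unfolding m(2) ab .
        then show ?thesis using bn by (simp add: field_simps)
      qed
      have "b (True,True,True) = (G2 / 3) * (G2 / 3) * (G2 / 3) / (\<beta> * \<beta>) * NN" unfolding Bs NN_def
        by (rule wsum_const) (use rowt t_def in auto)
      then have G20: "G2 = 0" using S1 NN0 bn by simp
      have m: "e r * rr r = c r * bb r" "e r * q r = c r * a r" "e r * pp r = bb r * a r" "e r = \<beta>"
        using row[OF r] by blast+
      have ab: "a r = 0" "bb r = 0" "c r = 0" using rowa[OF r] ca[OF r] G20 by auto
      have "rr r = 0" "q r = 0" "pp r = 0" using m bn unfolding ab by auto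
      then show ?thesis using ab by simp
    qed
  qed
  assume x: "x \<noteq> (False,False,False)"
  have bz: "b y = (\<Sum>r\<in>I. w r * nn r y) \<Longrightarrow> (\<And>r. r\<in>I \<Longrightarrow> w r \<noteq> 0 \<Longrightarrow> nn r y = 0) \<Longrightarrow> b y = 0" for y
    using wsum_const[of I w "\<lambda>r. nn r y" 0] by simp
  obtain x1 x2 x3 where xx: "x = (x1,x2,x3)" by (cases x) auto
  show "b x = 0"
    using x S1 unfolding xx
    apply (cases x1; cases x2; cases x3)
    apply (simp_all)
    apply (rule bz[OF Bs]; use Z c_def bb_def a_def rr_def q_def pp_def in auto)+
    done
qed




lemma in_span_self: "i < n \<Longrightarrow> g i \<in> span_of g n"
proof -
  assume i: "i < n"
  have "lin_comb (\<lambda>j. if j = i then 1 else 0) g n = g i"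
    unfolding lin_comb_def
  proof (rule ext)
    fix x
    have "(\<Sum>k<n. (if k = i then 1 else 0) * g k x) = (\<Sum>k<n. if k = i then g i x else 0)"
      by (rule sum.cong) auto
    then show "(\<Sum>k<n. (if k = i then 1 else 0) * g k x) = g i x" using i by simp
  qed
  then show ?thesis unfolding span_of_def by (metis rangeI)
qed

lemma prod_scale: "is_prod m \<Longrightarrow> is_prod (\<lambda>y. m y / d)"
proof -
  assume "is_prod m"
  then obtain X Y Z where m: "\<And>a b c. m (a,b,c) = X a * Y b * Z c" unfolding is_prod_def by blast
  show ?thesis unfolding is_prod_def
    by (rule exI[of _ "\<lambda>a. X a / d"], rule exI[of _ Y], rule exI[of _ Z]) (simp add: m)
qed

theorem theorem7:
  shows "\<forall>n b. orthonormal_basis_of b n S5 \<longrightarrow> \<not> LOCC_perfectly_distinguishable b n"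
proof (intro allI impI notI)
  fix n b assume ob: "orthonormal_basis_of b n S5" and ld: "LOCC_perfectly_distinguishable b n"
  obtain t where wf: "wf_protocol t" and idt: "\<And>i. i < n \<Longrightarrow> identifies t (b i) i"
    using ld unfolding LOCC_perfectly_distinguishable_def by blast
  obtain ms where R1: "R1 ms" and prods: "\<forall>(m,j)\<in>set ms. is_prod m" and R3: "R3 t ms"
    using rows_exist[OF wf] by blast
  have orth: "\<And>i j. i < n \<Longrightarrow> j < n \<Longrightarrow> inner (b i) (b j) = (if i = j then 1 else 0)"
    and span: "span_of b n = S5" using ob unfolding orthonormal_basis_of_def by auto
  have genS: "gen5 k \<in> span_of b n" if "k < 5" for k
    using in_span_self[OF that, of gen5] span unfolding S5_def by simp
  have supp: "b i x = 0" if i: "i < n" and x: "x \<noteq> (False,False,False)" for i x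
  proof -
    define I where "I = {..<length ms}"
    define mu where "mu r = inner (fst (ms ! r)) (b i)" for r
    define w where "w r = cnj (mu r) * mu r" for r
    define nn where "nn r = (\<lambda>y. fst (ms ! r) y / cnj (mu r))" for r
    show "b i x = 0"
    proof (rule core[of I w nn "b i" x])
      show "x \<noteq> (False,False,False)" by (rule x)
      show "b i \<in> S5" using in_span_self[OF i, of b] span by simp
      show "(\<Sum>r\<in>I. w r) \<noteq> 0"
      proof -
        have "inner (b i) (b i) = (\<Sum>(m,j)\<leftarrow>ms. cnj (inner m (b i)) * inner m (b i))"
          using R1 unfolding R1_def by blast
        also have "\<dots> = (\<Sum>r\<in>I. w r)"
          unfolding sum_list_map_nth I_def w_def mu_def by (simp add: split_def)
        finally show ?thesis using orth[OF i i] by simp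
      qed
      show "b i y = (\<Sum>r\<in>I. w r * nn r y)" for y
      proof -
        have "b i y = inner (ket y) (b i)" by (simp add: inner_ket_l)
        also have "\<dots> = (\<Sum>(m,j)\<leftarrow>ms. cnj (inner m (ket y)) * inner m (b i))"
          using R1 unfolding R1_def by blast
        also have "\<dots> = (\<Sum>r\<in>I. fst (ms ! r) y * mu r)"
          unfolding sum_list_map_nth I_def mu_def by (simp add: split_def inner_ket_r)
        also have "\<dots> = (\<Sum>r\<in>I. w r * nn r y)"
        proof (rule sum.cong[OF refl])
          fix r show "fst (ms ! r) y * mu r = w r * nn r y"
            unfolding w_def nn_def by (cases "mu r = 0") (auto simp: field_simps)
        qed
        finally show ?thesis .
      qed
      fix r assume r: "r \<in> I" and wr: "w r \<noteq> 0"
      define m where "m = fst (ms ! r)"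
      define j where "j = snd (ms ! r)"
      have mj: "(m, j) \<in> set ms" using r unfolding I_def m_def j_def by simp
      have mum: "mu r = inner m (b i)" by (simp add: mu_def m_def)
      have mu0: "mu r \<noteq> 0" using wr unfolding w_def by auto
      have pm: "is_prod m" using prods mj by auto
      have "is_prod (nn r)" unfolding nn_def using prod_scale[OF pm] m_def by simp
      moreover have "\<forall>k<5. inner (gen5 k) (nn r) = inner (gen5 k) (b i)"
      proof (intro allI impI)
        fix k :: nat assume k: "k < 5"
        have ji: "j = i" using R3 idt[OF i] mj mu0 unfolding R3_def mu_def m_def by fastforce
        have orthm: "inner m (b j') = 0" if "j' < n" "j' \<noteq> i" for j'
        proof (rule ccontr)
          assume "inner m (b j') \<noteq> 0"
          then have "j = j'" using R3 idt[OF that(1)] mj unfolding R3_def by fastforce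
          then show False using ji that by simp
        qed
        obtain c where gc: "gen5 k = lin_comb c b n" using genS[OF k] unfolding span_of_def by auto
        have "inner m (gen5 k) = (\<Sum>j'<n. c j' * inner m (b j'))" unfolding gc inner_lin_comb ..
        also have "\<dots> = (\<Sum>j'<n. if j' = i then c i * mu r else 0)"
          by (rule sum.cong[OF refl]) (auto simp: orthm mum)
        also have "\<dots> = c i * mu r" using i by simp
        finally have h1: "inner m (gen5 k) = c i * mu r" .
        have "inner (b i) (gen5 k) = (\<Sum>j'<n. c j' * inner (b i) (b j'))" unfolding gc inner_lin_comb ..
        also have "\<dots> = (\<Sum>j'<n. if j' = i then c i else 0)"
          by (rule sum.cong[OF refl]) (auto simp: orth i)
        also have "\<dots> = c i" using i by simp
        finally have h2: "inner (b i) (gen5 k) = c i" .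
        have "inner (gen5 k) m = cnj (mu r) * inner (gen5 k) (b i)"
          using h1 h2 inner_cnj[of "gen5 k" m] inner_cnj[of "gen5 k" "b i"] by simp
        then show "inner (gen5 k) (nn r) = inner (gen5 k) (b i)"
          unfolding nn_def inner_div_r using mu0 by (simp add: m_def)
      qed
      ultimately show "is_prod (nn r) \<and> (\<forall>k<5. inner (gen5 k) (nn r) = inner (gen5 k) (b i))" by blast
    qed
  qed
  obtain c where gc: "gen5 1 = lin_comb c b n" using genS[of 1] unfolding span_of_def by auto
  have "gen5 1 (False,False,True) = (\<Sum>j<n. c j * b j (False,False,True))"
    unfolding gc lin_comb_def ..
  also have "\<dots> = 0" using supp by simp
  finally show False by (simp add: gen5_def vsub_def ket_def)
qed


end
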